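(* For every integer $t\ge1$ and every integer $u$ with $0\le u\le t$, $$\frac{2u+1}{2t}\ \ge\ \frac{1}{1+2t}+\frac{2t}{1+2t}\sum_{i=1}^u\frac{(-t)_i(-1)^i}{(t+i)\,(t)_i}\ \ge\ \frac{2u+1}{2t}-\frac{4u^3+6u^2+8u+3}{12t^2}.$$
   Context: $(a)_m=a(a+1)\cdots(a+m-1)$ denotes the rising factorial, with $(a)_0=1$. *)

theory Defs
  imports Complex_Main
begin

end

theory Submission
  imports Defs
begin

lemma term_eq:
  fixes t i :: nat assumes "t \<ge> 1"
  shows "pochhammer (- real t) i * (-1) ^ i / ((real t + real i) * pochhammer (real t) i)
        = (\<Prod>j<i. (real t - real j) / (real t + real j)) / (real t + real i)"
proof -
  have a: "pochhammer (- real t) i * (-1) ^ i = (\<Prod>j<i. (real t - real j))"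
  proof -
    have "(\<Prod>j<i. (real t - real j)) = (\<Prod>j<i. (-1) * (- real t + real j))" by simp
    also have "\<dots> = (-1)^i * (\<Prod>j<i. (- real t + real j))" by (subst prod.distrib) simp
    finally have "(\<Prod>j<i. (real t - real j)) = (-1)^i * (\<Prod>j<i. (- real t + real j))" .
    thus ?thesis unfolding pochhammer_prod by (simp only: mult.commute atLeast0LessThan)
  qed
  have b: "pochhammer (real t) i = (\<Prod>j<i. (real t + real j))"
    by (simp add: pochhammer_prod atLeast0LessThan)
  have "(\<Prod>j<i. (real t - real j) / (real t + real j)) = (\<Prod>j<i. (real t - real j)) / (\<Prod>j<i. (real t + real j))"
    by (simp add: prod_dividef)
  thus ?thesis unfolding a b by simp
qed

lemma p_bounds:
  fixes t :: nat assumes "t \<ge> 1"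
  shows "i \<le> t \<Longrightarrow> 0 \<le> (\<Prod>j<i. (real t - real j) / (real t + real j))
      \<and> (\<Prod>j<i. (real t - real j) / (real t + real j)) \<le> 1
      \<and> (\<Prod>j<i. (real t - real j) / (real t + real j)) \<ge> 1 - real i * (real i - 1) / real t"
proof (induction i)
  case 0 then show ?case by simp
next
  case (Suc i)
  define p where "p = (\<Prod>j<i. (real t - real j) / (real t + real j))"
  define q where "q = (real t - real i) / (real t + real i)"
  have IH: "0 \<le> p" "p \<le> 1" "p \<ge> 1 - real i * (real i - 1) / real t"
    using Suc by (auto simp: p_def)
  have tp: "real t > 0" using assms by simp
  have q0: "0 \<le> q" "q \<le> 1" using Suc.prems tp by (auto simp: q_def divide_simps)
  have q1: "q \<ge> 1 - 2 * real i / real t"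
    using tp by (simp add: q_def divide_simps) (simp add: algebra_simps power2_eq_square)
  have e: "(\<Prod>j<Suc i. (real t - real j) / (real t + real j)) = p * q"
    by (simp add: p_def q_def)
  have "p * q \<ge> 1 - real (Suc i) * (real (Suc i) - 1) / real t"
  proof (cases "1 - real i * (real i - 1) / real t \<le> 0")
    case True
    have "1 - real (Suc i) * (real (Suc i) - 1) / real t \<le> 1 - real i * (real i - 1) / real t"
      using tp by (simp add: divide_simps) (simp add: algebra_simps)
    then show ?thesis using True IH q0 by (smt (verit) mult_nonneg_nonneg)
  next
    case False
    have "1 - real (Suc i) * (real (Suc i) - 1) / real t \<le> (1 - real i * (real i - 1) / real t) * (1 - 2 * real i / real t)"
    proof -
      have "(real i * (real i - 1) / real t) * (2 * real i / real t) \<ge> 0"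
        using tp by (cases i) auto
      thus ?thesis using tp by (simp add: algebra_simps add_divide_distrib diff_divide_distrib)
    qed
    also have "\<dots> \<le> (1 - real i * (real i - 1) / real t) * q"
      using False q1 by (simp add: mult_left_mono)
    also have "\<dots> \<le> p * q"
      using IH q0 by (simp add: mult_right_mono)
    finally show ?thesis by simp
  qed
  then show ?case unfolding e using IH q0 by (simp add: mult_le_one)
qed



lemma sum_sq:
  fixes t :: real assumes t: "t \<noteq> 0"
  shows "(\<Sum>i=1..u. 1/t - real i ^ 2 / t^2) = real u / t - real u * (real u + 1) * (2 * real u + 1) / (6 * t^2)"
proof (induction u)
  case 0 then show ?case by simp
next
  case (Suc u)
  have "(\<Sum>i=1..Suc u. 1/t - real i ^ 2 / t^2) = (\<Sum>i=1..u. 1/t - real i ^ 2 / t^2) + (1/t - real (Suc u) ^ 2 / t^2)"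
    by simp
  also have "\<dots> = real (Suc u) / t - real (Suc u) * (real (Suc u) + 1) * (2 * real (Suc u) + 1) / (6 * t^2)"
    unfolding Suc.IH using t by (simp add: field_simps power2_eq_square)
  finally show ?case .
qed

lemma final_low:
  fixes T U X :: real
  assumes "T \<ge> 1" "U \<ge> 0" "X \<ge> U / T - U * (U + 1) * (2 * U + 1) / (6 * T^2)"
  shows "1 / (1 + 2 * T) + (2 * T / (1 + 2 * T)) * X \<ge> (2 * U + 1) / (2 * T)
              - (4 * U ^ 3 + 6 * U ^ 2 + 8 * U + 3) / (12 * T ^ 2)"
proof -
  define B where "B = U / T - U * (U + 1) * (2 * U + 1) / (6 * T^2)"
  have "1 / (1 + 2 * T) + (2 * T / (1 + 2 * T)) * B \<le> 1 / (1 + 2 * T) + (2 * T / (1 + 2 * T)) * X"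
    using assms by (simp add: B_def mult_left_mono divide_right_mono)
  moreover have "(2 * U + 1) / (2 * T) - (4 * U ^ 3 + 6 * U ^ 2 + 8 * U + 3) / (12 * T ^ 2)
      \<le> 1 / (1 + 2 * T) + (2 * T / (1 + 2 * T)) * B"
  proof -
    have e: "1 / (1 + 2 * T) + (2 * T / (1 + 2 * T)) * B = (1 + 2*U - U * (U + 1) * (2 * U + 1) / (3 * T)) / (1 + 2*T)"
    proof -
      have "T > 0" "1 + 2*T > 0" using assms(1) by auto
      thus ?thesis by (simp add: B_def divide_simps power2_eq_square) (simp add: algebra_simps)
    qed
    have d1: "(1 + 2*U) / (1 + 2*T) - (2 * U + 1) / (2 * T) \<ge> - (2*U+1) / (4 * T^2)"
    proof -
      have "(2 * U + 1) / (2 * T) - (1 + 2*U) / (1 + 2*T) = (2*U+1) / (2*T*(2*T+1))"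
        using assms(1) by (simp add: field_simps)
      moreover have "(2*U+1) / (2*T*(2*T+1)) \<le> (2*U+1) / (4 * T^2)"
        using assms by (intro divide_left_mono) (auto simp: power2_eq_square)
      moreover have "- (2*U+1) / (4 * T^2) = - ((2*U+1) / (4 * T^2))" by (rule minus_divide_left[symmetric])
      ultimately show ?thesis by linarith
    qed
    have d2: "(U * (U + 1) * (2 * U + 1) / (3 * T)) / (1 + 2*T) \<le> U * (U + 1) * (2 * U + 1) / (6 * T^2)"
    proof -
      have "(U * (U + 1) * (2 * U + 1) / (3 * T)) / (1 + 2*T) = U * (U + 1) * (2 * U + 1) / (3 * T * (1 + 2*T))"
        by simp
      also have "\<dots> \<le> U * (U + 1) * (2 * U + 1) / (6 * T^2)"
        using assms by (intro divide_left_mono) (auto simp: power2_eq_square)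
      finally show ?thesis .
    qed
    have "(1 + 2*U - U * (U + 1) * (2 * U + 1) / (3 * T)) / (1 + 2*T)
       = (1 + 2*U) / (1 + 2*T) - (U * (U + 1) * (2 * U + 1) / (3 * T)) / (1 + 2*T)"
      by (simp add: diff_divide_distrib)
    moreover have "(2 * U + 1) / (2 * T) - (4 * U ^ 3 + 6 * U ^ 2 + 8 * U + 3) / (12 * T ^ 2)
       = (2 * U + 1) / (2 * T) - (2*U+1) / (4 * T^2) - U * (U + 1) * (2 * U + 1) / (6 * T^2)"
      using assms(1) by (simp add: field_simps power2_eq_square power3_eq_cube)
    ultimately show ?thesis unfolding e using d1 d2 by linarith
  qed
  ultimately show ?thesis by linarith
qed

theorem mainTheorem8:
  fixes t u :: nat
  assumes "t \<ge> 1" and "u \<le> t"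
  defines "S \<equiv> 1 / (1 + 2 * real t) + (2 * real t / (1 + 2 * real t)) *
      (\<Sum>i=1..u. pochhammer (- real t) i * (-1) ^ i / ((real t + real i) * pochhammer (real t) i))"
  shows "(2 * real u + 1) / (2 * real t) \<ge> S
       \<and> S \<ge> (2 * real u + 1) / (2 * real t)
              - (4 * real u ^ 3 + 6 * real u ^ 2 + 8 * real u + 3) / (12 * real t ^ 2)"
proof -
  define p where "p = (\<lambda>i. (\<Prod>j<i. (real t - real j) / (real t + real j)))"
  define X where "X = (\<Sum>i=1..u. pochhammer (- real t) i * (-1) ^ i / ((real t + real i) * pochhammer (real t) i))"
  have tp: "real t \<ge> 1" using assms by simp
  have X: "X = (\<Sum>i=1..u. p i / (real t + real i))"
    unfolding X_def p_def using term_eq[OF assms(1)] by simp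
  have up: "p i / (real t + real i) \<le> 1 / real t" if "i \<in> {1..u}" for i
  proof -
    have "0 \<le> p i" "p i \<le> 1" using p_bounds[OF assms(1), of i] that assms(2) by (auto simp: p_def)
    thus ?thesis using tp by (intro frac_le) auto
  qed
  have lo: "p i / (real t + real i) \<ge> 1 / real t - real i ^ 2 / real t ^ 2" if "i \<in> {1..u}" for i
  proof -
    have pl: "p i \<ge> 1 - real i * (real i - 1) / real t" using p_bounds[OF assms(1), of i] that assms(2) by (auto simp: p_def)
    have ii: "real i * (real i - 1) \<ge> 0" using that by auto
    have s1: "p i / (real t + real i) \<ge> (1 - real i * (real i - 1) / real t) / (real t + real i)"
      using pl tp by (intro divide_right_mono) auto
    have s2: "(1 - real i * (real i - 1) / real t) / (real t + real i)
       = 1 / (real t + real i) - real i * (real i - 1) / (real t * (real t + real i))"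
      using tp by (simp add: diff_divide_distrib)
    have s3: "real i * (real i - 1) / (real t * (real t + real i)) \<le> real i * (real i - 1) / real t ^ 2"
      using tp ii by (intro divide_left_mono) (auto simp: power2_eq_square)
    have s4: "1 / (real t + real i) \<ge> 1 / real t - real i / real t ^ 2"
    proof -
      have "1 / real t - real i / real t ^ 2 = (real t - real i) / real t^2"
        using tp by (simp add: field_simps power2_eq_square)
      also have "\<dots> \<le> 1 / (real t + real i)"
        using tp by (simp add: divide_simps power2_eq_square) (simp add: algebra_simps)
      finally show ?thesis .
    qed
    have s5: "1 / real t - real i / real t ^ 2 - real i * (real i - 1) / real t ^ 2 = 1 / real t - real i ^ 2 / real t ^ 2"
      using tp by (simp add: field_simps power2_eq_square)
    show ?thesis using s1 s2 s3 s4 s5 by linarith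
  qed
  have Xu: "X \<le> real u / real t"
  proof -
    have "X \<le> (\<Sum>i=1..u. 1 / real t)" unfolding X by (rule sum_mono) (rule up)
    thus ?thesis by simp
  qed
  have Xl: "X \<ge> real u / real t - real u * (real u + 1) * (2 * real u + 1) / (6 * real t^2)"
  proof -
    have "X \<ge> (\<Sum>i=1..u. 1 / real t - real i ^ 2 / real t ^ 2)" unfolding X by (rule sum_mono) (rule lo)
    thus ?thesis using sum_sq[of "real t" u] tp by simp
  qed
  have S: "S = 1 / (1 + 2 * real t) + (2 * real t / (1 + 2 * real t)) * X"
    unfolding S_def X_def ..
  have "S \<le> 1 / (1 + 2 * real t) + (2 * real t / (1 + 2 * real t)) * (real u / real t)"
  proof -
    have "(2 * real t / (1 + 2 * real t)) * X \<le> (2 * real t / (1 + 2 * real t)) * (real u / real t)"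
      using Xu tp by (intro mult_left_mono) auto
    thus ?thesis unfolding S by linarith
  qed
  also have "\<dots> = (2 * real u + 1) / (1 + 2 * real t)"
    using tp by (simp add: field_simps)
  also have "\<dots> \<le> (2 * real u + 1) / (2 * real t)"
    using tp by (intro divide_left_mono) auto
  finally have A: "S \<le> (2 * real u + 1) / (2 * real t)" .
  have B: "S \<ge> (2 * real u + 1) / (2 * real t)
              - (4 * real u ^ 3 + 6 * real u ^ 2 + 8 * real u + 3) / (12 * real t ^ 2)"
    unfolding S by (rule final_low[OF tp _ Xl]) simp
  show ?thesis using A B by simp
qed

end
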